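(* Let $\mathbb{K}$ be a field with $\mathbb{Q}\subseteq\mathbb{K}\subseteq\mathbb{C}$, and let $n\ge 1$. Suppose the complex numbers $x_1,\dots,x_n$ and $y_1,\dots,y_n$ satisfy the system $$f_j(x_1,\dots,x_n,y_1,\dots,y_n)=0\qquad(j=1,\dots,n)$$ for some polynomials $f_j(X_1,\dots,X_n,Y_1,\dots,Y_n)\in\mathbb{K}[X_1,\dots,X_n,Y_1,\dots,Y_n]$, $j=1,\dots,n$. If $x_1,\dots,x_n$ are algebraically independent over $\mathbb{K}$ and $$\det\Big(\frac{\partial f_j}{\partial X_i}(x_1,\dots,x_n,y_1,\dots,y_n)\Big)_{1\le i,j\le n}\neq 0,$$ then $y_1,\dots,y_n$ are algebraically independent over $\mathbb{K}$.
   Context: In the Jacobian matrix, $j$ indexes rows and $i$ indexes columns (the determinant is of an $n\times n$ matrix). *)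

theory Defs
  imports Complex_Main "HOL-Library.Poly_Mapping" "Jordan_Normal_Form.Determinant"
begin

type_synonym 'v mpoly_c = "('v \<Rightarrow>\<^sub>0 nat) \<Rightarrow>\<^sub>0 complex"

definition coeffs_in :: "complex set \<Rightarrow> 'v mpoly_c \<Rightarrow> bool" where
  "coeffs_in K p \<longleftrightarrow> (\<forall>m. Poly_Mapping.lookup p m \<in> K)"

definition mvars :: "'v mpoly_c \<Rightarrow> 'v set" where
  "mvars p = \<Union> (Poly_Mapping.keys ` Poly_Mapping.keys p)"

definition mpeval :: "'v mpoly_c \<Rightarrow> ('v \<Rightarrow> complex) \<Rightarrow> complex" where
  "mpeval p a = (\<Sum>m\<in>Poly_Mapping.keys p. Poly_Mapping.lookup p m * (\<Prod>v\<in>Poly_Mapping.keys m. a v ^ Poly_Mapping.lookup m v))"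

definition mpderiv :: "'v \<Rightarrow> 'v mpoly_c \<Rightarrow> 'v mpoly_c" where
  "mpderiv v p = Abs_poly_mapping
     (\<lambda>m. of_nat (Poly_Mapping.lookup m v + 1) * Poly_Mapping.lookup p (m + Poly_Mapping.single v 1))"

definition is_subfield_C :: "complex set \<Rightarrow> bool" where
  "is_subfield_C K \<longleftrightarrow> 0 \<in> K \<and> 1 \<in> K \<and>
     (\<forall>a\<in>K. \<forall>b\<in>K. a + b \<in> K \<and> a * b \<in> K) \<and>
     (\<forall>a\<in>K. - a \<in> K) \<and> (\<forall>a\<in>K. a \<noteq> 0 \<longrightarrow> inverse a \<in> K)"

definition alg_indep :: "complex set \<Rightarrow> nat \<Rightarrow> (nat \<Rightarrow> complex) \<Rightarrow> bool" where
  "alg_indep K n z \<longleftrightarrow>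
     (\<forall>p :: nat mpoly_c. coeffs_in K p \<and> mvars p \<subseteq> {..<n} \<and> mpeval p z = 0 \<longrightarrow> p = 0)"

end

theory Submission
  imports Defs "HOL-Computational_Algebra.Polynomial"
begin


definition sr :: "complex set \<Rightarrow> bool" where
  "sr E \<longleftrightarrow> 1 \<in> E \<and> (\<forall>a\<in>E. \<forall>b\<in>E. a + b \<in> E \<and> a * b \<in> E) \<and> (\<forall>a\<in>E. - a \<in> E)"

definition der :: "complex set \<Rightarrow> (complex \<Rightarrow> complex) \<Rightarrow> bool" where
  "der E D \<longleftrightarrow> (\<forall>a\<in>E. \<forall>b\<in>E. D (a + b) = D a + D b \<and> D (a * b) = a * D b + b * D a)"

definition cin :: "complex set \<Rightarrow> complex poly \<Rightarrow> bool" where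
  "cin E p \<longleftrightarrow> (\<forall>i. coeff p i \<in> E)"

definition adj :: "complex set \<Rightarrow> complex \<Rightarrow> complex set" where
  "adj E t = {poly p t | p. cin E p}"

lemma sr_1: "sr E \<Longrightarrow> 1 \<in> E" by (simp add: sr_def)
lemma sr_add: "sr E \<Longrightarrow> a \<in> E \<Longrightarrow> b \<in> E \<Longrightarrow> a + b \<in> E" by (simp add: sr_def)
lemma sr_mult: "sr E \<Longrightarrow> a \<in> E \<Longrightarrow> b \<in> E \<Longrightarrow> a * b \<in> E" by (simp add: sr_def)
lemma sr_uminus: "sr E \<Longrightarrow> a \<in> E \<Longrightarrow> - a \<in> E" by (simp add: sr_def)
lemma sr_0: "sr E \<Longrightarrow> 0 \<in> E"
  using sr_add[of E 1 "-1"] sr_1 sr_uminus by fastforce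
lemma sr_diff: "sr E \<Longrightarrow> a \<in> E \<Longrightarrow> b \<in> E \<Longrightarrow> a - b \<in> E"
  using sr_add[of E a "-b"] sr_uminus by fastforce
lemma sr_sum: "sr E \<Longrightarrow> (\<And>i. i \<in> I \<Longrightarrow> h i \<in> E) \<Longrightarrow> sum h I \<in> E"
  by (induction I rule: infinite_finite_induct) (auto simp: sr_0 sr_add)
lemma sr_prod: "sr E \<Longrightarrow> (\<And>i. i \<in> I \<Longrightarrow> h i \<in> E) \<Longrightarrow> prod h I \<in> E"
  by (induction I rule: infinite_finite_induct) (auto simp: sr_1 sr_mult)
lemma sr_power: "sr E \<Longrightarrow> a \<in> E \<Longrightarrow> a ^ k \<in> E"
  by (induction k) (auto simp: sr_1 sr_mult)
lemma sr_of_nat: "sr E \<Longrightarrow> of_nat k \<in> E"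
  by (induction k) (auto simp: sr_0 sr_1 sr_add)

lemma der_add: "der E D \<Longrightarrow> a \<in> E \<Longrightarrow> b \<in> E \<Longrightarrow> D (a + b) = D a + D b" by (simp add: der_def)
lemma der_mult: "der E D \<Longrightarrow> a \<in> E \<Longrightarrow> b \<in> E \<Longrightarrow> D (a * b) = a * D b + b * D a" by (simp add: der_def)
lemma der_0: "sr E \<Longrightarrow> der E D \<Longrightarrow> D 0 = 0"
  using der_add[of E D 0 0] sr_0 by force
lemma der_1: "sr E \<Longrightarrow> der E D \<Longrightarrow> D 1 = 0"
  using der_mult[of E D 1 1] sr_1 by force
lemma der_uminus: "sr E \<Longrightarrow> der E D \<Longrightarrow> a \<in> E \<Longrightarrow> D (- a) = - D a"
  using der_add[of E D a "-a"] sr_uminus der_0 by (metis add.right_inverse add_eq_0_iff)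
lemma der_diff: "sr E \<Longrightarrow> der E D \<Longrightarrow> a \<in> E \<Longrightarrow> b \<in> E \<Longrightarrow> D (a - b) = D a - D b"
  using der_add[of E D a "-b"] der_uminus[of E D b] sr_uminus by fastforce
lemma der_sum: "sr E \<Longrightarrow> der E D \<Longrightarrow> (\<And>i. i \<in> I \<Longrightarrow> h i \<in> E) \<Longrightarrow> D (sum h I) = (\<Sum>i\<in>I. D (h i))"
proof (induction I rule: infinite_finite_induct)
  case (insert x F)
  then show ?case using der_add[of E D "h x" "sum h F"] sr_sum[of E F h] by auto
qed (auto simp: der_0)
lemma der_prod: assumes "sr E" "der E D" and fin: "finite I" and hE: "\<And>i. i \<in> I \<Longrightarrow> h i \<in> E" shows
  "D (prod h I) = (\<Sum>v\<in>I. D (h v) * prod h (I - {v}))"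
  using fin hE proof (induction I rule: finite_induct)
  case empty then show ?case using assms by (simp add: der_1)
next
  case (insert x F)
  have e: "prod h F \<in> E" using insert sr_prod[of E F h] assms by auto
  have "D (prod h (insert x F)) = h x * D (prod h F) + prod h F * D (h x)"
    using insert der_mult[of E D "h x" "prod h F"] e assms by auto
  also have "\<dots> = (\<Sum>v\<in>F. D (h v) * (h x * prod h (F - {v}))) + D (h x) * prod h F"
    using insert by (simp add: sum_distrib_left algebra_simps)
  also have "\<dots> = (\<Sum>v\<in>insert x F. D (h v) * prod h (insert x F - {v}))"
  proof -
    have 1: "\<And>v. v \<in> F \<Longrightarrow> prod h (insert x F - {v}) = h x * prod h (F - {v})"
    proof -
      fix v assume "v \<in> F"
      then have "insert x F - {v} = insert x (F - {v})" "x \<notin> F - {v}" using insert by auto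
      then show "prod h (insert x F - {v}) = h x * prod h (F - {v})" using insert by simp
    qed
    have 2: "insert x F - {x} = F" using insert by auto
    show ?thesis using insert 1 2 by (simp add: sum.insert)
  qed
  finally show ?case .
qed
lemma der_power: "sr E \<Longrightarrow> der E D \<Longrightarrow> a \<in> E \<Longrightarrow> D (a ^ k) = of_nat k * a ^ (k - 1) * D a"
proof (induction k)
  case 0 then show ?case by (simp add: der_1)
next
  case (Suc k)
  then have "D (a ^ Suc k) = a * D (a ^ k) + a ^ k * D a"
    using der_mult[of E D a "a ^ k"] sr_power by auto
  also have "\<dots> = of_nat (Suc k) * a ^ k * D a"
    using Suc by (cases k) (auto simp: algebra_simps)
  finally show ?case by simp
qed

definition LL :: "(complex \<Rightarrow> complex) \<Rightarrow> complex \<Rightarrow> complex \<Rightarrow> complex poly \<Rightarrow> complex" where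
  "LL D t v p = poly (map_poly D p) t + poly (pderiv p) t * v"

lemma cin_add: "sr E \<Longrightarrow> cin E p \<Longrightarrow> cin E q \<Longrightarrow> cin E (p + q)"
  by (simp add: cin_def sr_add)
lemma cin_uminus: "sr E \<Longrightarrow> cin E p \<Longrightarrow> cin E (- p)"
  by (simp add: cin_def sr_uminus)
lemma cin_diff: "sr E \<Longrightarrow> cin E p \<Longrightarrow> cin E q \<Longrightarrow> cin E (p - q)"
  by (simp add: cin_def sr_diff)
lemma cin_mult: "sr E \<Longrightarrow> cin E p \<Longrightarrow> cin E q \<Longrightarrow> cin E (p * q)"
  unfolding cin_def coeff_mult by (auto intro!: sr_sum sr_mult)
lemma cin_const: "sr E \<Longrightarrow> c \<in> E \<Longrightarrow> cin E [:c:]"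
  by (simp add: cin_def coeff_pCons sr_0 split: nat.split)
lemma cin_X: "sr E \<Longrightarrow> cin E [:0,1:]"
  by (simp add: cin_def coeff_pCons sr_0 sr_1 split: nat.split)
lemma cin_monom: "sr E \<Longrightarrow> c \<in> E \<Longrightarrow> cin E (monom c k)"
  by (simp add: cin_def coeff_monom sr_0)
lemma cin_smult: "sr E \<Longrightarrow> c \<in> E \<Longrightarrow> cin E p \<Longrightarrow> cin E (smult c p)"
  by (simp add: cin_def sr_mult)
lemma cin_pderiv: "sr E \<Longrightarrow> cin E p \<Longrightarrow> cin E (pderiv p)"
  unfolding cin_def coeff_pderiv by (metis sr_mult sr_of_nat)
lemma cin_poly: "sr E \<Longrightarrow> cin E p \<Longrightarrow> t \<in> E \<Longrightarrow> poly p t \<in> E"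
  by (simp add: poly_altdef cin_def sr_sum sr_mult sr_power)

lemma map_der_add: "sr E \<Longrightarrow> der E D \<Longrightarrow> cin E p \<Longrightarrow> cin E q \<Longrightarrow>
   map_poly D (p + q) = map_poly D p + map_poly D q"
  by (rule poly_eqI) (simp add: coeff_map_poly der_0 der_add cin_def)

lemma map_der_mult: "sr E \<Longrightarrow> der E D \<Longrightarrow> cin E p \<Longrightarrow> cin E q \<Longrightarrow>
   map_poly D (p * q) = map_poly D p * q + p * map_poly D q"
proof (rule poly_eqI)
  fix n
  assume a: "sr E" "der E D" "cin E p" "cin E q"
  have "coeff (map_poly D (p * q)) n = D (\<Sum>i\<le>n. coeff p i * coeff q (n - i))"
    by (simp add: coeff_map_poly der_0[OF a(1,2)] coeff_mult)
  also have "\<dots> = (\<Sum>i\<le>n. D (coeff p i * coeff q (n - i)))"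
    using a by (intro der_sum) (auto simp: cin_def sr_mult)
  also have "\<dots> = (\<Sum>i\<le>n. D (coeff p i) * coeff q (n - i)) + (\<Sum>i\<le>n. coeff p i * D (coeff q (n - i)))"
    using a by (simp add: der_mult cin_def sum.distrib[symmetric] algebra_simps)
  also have "\<dots> = coeff (map_poly D p * q + p * map_poly D q) n"
    by (simp add: coeff_mult coeff_map_poly der_0[OF a(1,2)])
  finally show "coeff (map_poly D (p * q)) n = coeff (map_poly D p * q + p * map_poly D q) n" .
qed

lemma LL_add: "sr E \<Longrightarrow> der E D \<Longrightarrow> cin E p \<Longrightarrow> cin E q \<Longrightarrow> LL D t v (p + q) = LL D t v p + LL D t v q"
  by (simp add: LL_def map_der_add pderiv_add algebra_simps)

lemma LL_mult: "sr E \<Longrightarrow> der E D \<Longrightarrow> cin E p \<Longrightarrow> cin E q \<Longrightarrow>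
   LL D t v (p * q) = poly p t * LL D t v q + poly q t * LL D t v p"
  by (simp add: LL_def map_der_mult pderiv_mult algebra_simps)

lemma LL_0: "LL D t v 0 = 0" by (simp add: LL_def)
lemma LL_uminus: "sr E \<Longrightarrow> der E D \<Longrightarrow> cin E p \<Longrightarrow> LL D t v (- p) = - LL D t v p"
  using LL_add[of E D p "-p" t v] cin_uminus[of E p] LL_0[of D t v] by (simp add: add_eq_0_iff)

lemma LL_diff: "sr E \<Longrightarrow> der E D \<Longrightarrow> cin E p \<Longrightarrow> cin E q \<Longrightarrow> LL D t v (p - q) = LL D t v p - LL D t v q"
  using LL_add[of E D p "-q" t v] LL_uminus[of E D q t v] cin_uminus[of E q] by simp

lemma LL_const: "sr E \<Longrightarrow> der E D \<Longrightarrow> LL D t v [:c:] = D c"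
  using der_0[of E D] by (simp add: LL_def map_poly_pCons)

lemma LL_X: "sr E \<Longrightarrow> der E D \<Longrightarrow> LL D t v [:0,1:] = v"
  using der_0[of E D] der_1[of E D] by (simp add: LL_def map_poly_pCons pderiv_pCons)



definition good :: "complex set \<Rightarrow> (complex \<Rightarrow> complex) \<Rightarrow> complex \<Rightarrow> complex \<Rightarrow> bool" where
  "good E D t v \<longleftrightarrow> (\<forall>p. cin E p \<and> poly p t = 0 \<longrightarrow> LL D t v p = 0)"

lemma adj_sr: assumes "sr E" shows "sr (adj E t)"
proof -
  have "1 \<in> adj E t" unfolding adj_def using cin_const[OF assms sr_1[OF assms]]
    by (auto intro!: exI[of _ "[:1:]"])
  moreover have "a + b \<in> adj E t \<and> a * b \<in> adj E t" if ha: "a \<in> adj E t" and hb: "b \<in> adj E t" for a b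
  proof -
    obtain p where "cin E p" "a = poly p t" using ha unfolding adj_def by blast
    moreover obtain q where "cin E q" "b = poly q t" using hb unfolding adj_def by blast
    ultimately have "a + b = poly (p + q) t" "cin E (p + q)" "a * b = poly (p * q) t" "cin E (p * q)"
      using cin_add[OF assms] cin_mult[OF assms] by auto
    then show ?thesis unfolding adj_def by blast
  qed
  moreover have "- a \<in> adj E t" if ha: "a \<in> adj E t" for a
  proof -
    obtain p where "cin E p" "a = poly p t" using ha unfolding adj_def by blast
    then show ?thesis unfolding adj_def using cin_uminus[OF assms]
      by (auto intro!: exI[of _ "- p"])
  qed
  ultimately show ?thesis unfolding sr_def by auto
qed

lemma adj_sub: "sr E \<Longrightarrow> e \<in> E \<Longrightarrow> e \<in> adj E t"
  unfolding adj_def using cin_const by (auto intro!: exI[of _ "[:e:]"])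

lemma adj_t: "sr E \<Longrightarrow> t \<in> adj E t"
  unfolding adj_def using cin_X by (auto intro!: exI[of _ "[:0,1:]"])

lemma ext_good:
  assumes E: "sr E" and D: "der E D" and g: "good E D t v"
  shows "\<exists>D'. der (adj E t) D' \<and> (\<forall>e\<in>E. D' e = D e) \<and> D' t = v"
proof -
  define D' where "D' z = LL D t v (SOME p. cin E p \<and> poly p t = z)" for z
  have wd: "D' (poly p t) = LL D t v p" if "cin E p" for p
  proof -
    define q where "q = (SOME q. cin E q \<and> poly q t = poly p t)"
    have q: "cin E q \<and> poly q t = poly p t" unfolding q_def by (rule someI[of _ p]) (use that in auto)
    have "poly (q - p) t = 0" using q by simp
    then have "LL D t v (q - p) = 0" using g q that cin_diff[OF E] unfolding good_def by blast
    then have "LL D t v q = LL D t v p" using LL_diff[OF E D] q that by simp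
    then show ?thesis unfolding D'_def q_def by simp
  qed
  have "der (adj E t) D'"
    unfolding der_def
  proof (intro ballI conjI)
    fix a b assume "a \<in> adj E t" "b \<in> adj E t"
    then obtain p q where pq: "cin E p" "cin E q" "a = poly p t" "b = poly q t" unfolding adj_def by auto
    show "D' (a + b) = D' a + D' b"
      using wd[of "p + q"] wd[of p] wd[of q] pq cin_add[OF E] LL_add[OF E D] by simp
    show "D' (a * b) = a * D' b + b * D' a"
      using wd[of "p * q"] wd[of p] wd[of q] pq cin_mult[OF E] LL_mult[OF E D] by simp
  qed
  moreover have "\<forall>e\<in>E. D' e = D e"
  proof
    fix e assume "e \<in> E"
    then have "D' (poly [:e:] t) = LL D t v [:e:]" using wd cin_const[OF E] by blast
    then show "D' e = D e" using LL_const[OF E D] by simp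
  qed
  moreover have "D' t = v" using wd[of "[:0,1:]"] cin_X[OF E] LL_X[OF E D] by simp
  ultimately show ?thesis by blast
qed

lemma trans_good:
  assumes "\<not> (\<exists>p. cin E p \<and> p \<noteq> 0 \<and> poly p t = 0)"
  shows "good E D t v"
  using assms unfolding good_def by (auto simp: LL_def)

lemma alg_good:
  assumes E: "sr E" and D: "der E D" and alg: "\<exists>p. cin E p \<and> p \<noteq> 0 \<and> poly p t = 0"
  shows "\<exists>v. good E D t v"
proof -
  define P where "P p \<longleftrightarrow> cin E p \<and> p \<noteq> 0 \<and> poly p t = 0" for p
  obtain m where m: "P m" and mmin: "\<And>q. P q \<Longrightarrow> degree m \<le> degree q"
    using ex_has_least_nat[of P _ degree] alg unfolding P_def by metis
  have mE: "cin E m" "m \<noteq> 0" "poly m t = 0" using m unfolding P_def by auto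
  have dm: "degree m > 0"
  proof (rule ccontr)
    assume "\<not> degree m > 0"
    then have eq: "m = [:coeff m 0:]" by (metis gr0I degree_0_id)
    have "poly m t = coeff m 0" by (subst eq) simp
    moreover have "coeff m 0 \<noteq> 0" using mE(2) eq by (metis pCons_0_0)
    ultimately show False using mE by simp
  qed
  have pm: "pderiv m \<noteq> 0" using dm by (simp add: pderiv_eq_0_iff)
  have dpm: "degree (pderiv m) < degree m" using dm by (simp add: degree_pderiv)
  have pmt: "poly (pderiv m) t \<noteq> 0"
    using mmin[of "pderiv m"] pm dpm cin_pderiv[OF E mE(1)] unfolding P_def by force
  define v where "v = - poly (map_poly D m) t / poly (pderiv m) t"
  have Lm: "LL D t v m = 0" using pmt unfolding LL_def v_def by (simp add: field_simps)
  have "LL D t v p = 0" if "cin E p" "poly p t = 0" for p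
    using that
  proof (induction "degree p" arbitrary: p rule: less_induct)
    case less
    show ?case
    proof (cases "p = 0")
      case True then show ?thesis by (simp add: LL_def)
    next
      case False
      then have dp: "degree m \<le> degree p" using mmin less.prems unfolding P_def by auto
      define c where "c = lead_coeff m"
      define d where "d = lead_coeff p"
      define k where "k = degree p - degree m"
      define q where "q = smult c p - monom d k * m"
      have cE: "c \<in> E" "d \<in> E" using mE less.prems unfolding c_def d_def cin_def by auto
      have c0: "c \<noteq> 0" "d \<noteq> 0" using mE False unfolding c_def d_def by auto
      have qE: "cin E q" unfolding q_def
        using cin_smult[OF E] cin_mult[OF E] cin_monom[OF E] cin_diff[OF E] cE less.prems mE by auto
      have qt: "poly q t = 0" unfolding q_def using less.prems mE by simp
      have deg1: "degree (monom d k * m) = degree p"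
        using c0 mE dp unfolding k_def by (simp add: degree_mult_eq degree_monom_eq)
      have dq: "degree q < degree p"
      proof -
        have le: "degree q \<le> degree p" unfolding q_def
          using degree_diff_le[of "smult c p" "degree p" "monom d k * m"] deg1 by simp
        have "coeff q (degree p) = 0" unfolding q_def
          using dp by (simp add: coeff_monom_mult c_def d_def k_def)
        moreover have "degree p > 0" using dp dm by simp
        ultimately show ?thesis using le
        proof (cases "degree q = degree p")
          case True
          then have "q = 0" using \<open>coeff q (degree p) = 0\<close> by (metis leading_coeff_0_iff)
          then show ?thesis using \<open>degree p > 0\<close> by simp
        qed simp
      qed
      have "LL D t v q = 0" using less.hyps[OF dq qE qt] .
      moreover have "LL D t v q = c * LL D t v p"
      proof -
        have "smult c p = [:c:] * p" by simp
        then have 1: "LL D t v (smult c p) = c * LL D t v p"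
          using LL_mult[OF E D cin_const[OF E cE(1)] less.prems(1)] less.prems(2) by simp
        have 2: "LL D t v (monom d k * m) = 0"
          using LL_mult[OF E D cin_monom[OF E cE(2)] mE(1)] Lm mE(3) by simp
        show ?thesis unfolding q_def
          using LL_diff[OF E D cin_smult[OF E cE(1) less.prems(1)] cin_mult[OF E cin_monom[OF E cE(2)] mE(1)]] 1 2
          by simp
      qed
      ultimately show ?thesis using c0 by simp
    qed
  qed
  then show ?thesis unfolding good_def by blast
qed

lemma ext_any:
  assumes E: "sr E" and D: "der E D"
  shows "\<exists>D'. der (adj E t) D' \<and> (\<forall>e\<in>E. D' e = D e)"
proof (cases "\<exists>p. cin E p \<and> p \<noteq> 0 \<and> poly p t = 0")
  case True
  then obtain v where "good E D t v" using alg_good[OF E D] by blast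
  then show ?thesis using ext_good[OF E D] by blast
next
  case False
  then show ?thesis using ext_good[OF E D trans_good[OF False]] by blast
qed



definition mon :: "('v \<Rightarrow>\<^sub>0 nat) \<Rightarrow> ('v \<Rightarrow> complex) \<Rightarrow> complex" where
  "mon m a = (\<Prod>v\<in>Poly_Mapping.keys m. a v ^ Poly_Mapping.lookup m v)"

lemma mon_superset: "finite W \<Longrightarrow> Poly_Mapping.keys m \<subseteq> W \<Longrightarrow>
   mon m a = (\<Prod>v\<in>W. a v ^ Poly_Mapping.lookup m v)"
  unfolding mon_def by (rule prod.mono_neutral_left) (auto simp: in_keys_iff)

lemma mpeval_mon: "mpeval p a = (\<Sum>m\<in>Poly_Mapping.keys p. Poly_Mapping.lookup p m * mon m a)"
  by (simp add: mpeval_def mon_def)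

lemma mpeval_superset: "finite S \<Longrightarrow> Poly_Mapping.keys p \<subseteq> S \<Longrightarrow>
   mpeval p a = (\<Sum>m\<in>S. Poly_Mapping.lookup p m * mon m a)"
  unfolding mpeval_mon by (rule sum.mono_neutral_left) (auto simp: in_keys_iff)

lemma mpeval_0[simp]: "mpeval 0 a = 0"
  by (simp add: mpeval_def)

lemma mpeval_add: "mpeval (p + q) a = mpeval p a + mpeval q a"
proof -
  let ?S = "Poly_Mapping.keys p \<union> Poly_Mapping.keys q"
  have "mpeval (p + q) a = (\<Sum>m\<in>?S. Poly_Mapping.lookup (p + q) m * mon m a)"
    by (rule mpeval_superset) (auto simp: keys_add)
  also have "\<dots> = (\<Sum>m\<in>?S. Poly_Mapping.lookup p m * mon m a) + (\<Sum>m\<in>?S. Poly_Mapping.lookup q m * mon m a)"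
    by (simp add: lookup_add sum.distrib algebra_simps)
  also have "\<dots> = mpeval p a + mpeval q a"
    by (subst (1 2) mpeval_superset[where S = ?S]) auto
  finally show ?thesis .
qed

lemma mvars_add: "mvars (p + q) \<subseteq> mvars p \<union> mvars q"
  unfolding mvars_def using keys_add[of p q] by auto

lemma coeffs_in_add: "is_subfield_C K \<Longrightarrow> coeffs_in K p \<Longrightarrow> coeffs_in K q \<Longrightarrow> coeffs_in K (p + q)"
  by (simp add: coeffs_in_def lookup_add is_subfield_C_def)

lemma coeffs_in_0: "is_subfield_C K \<Longrightarrow> coeffs_in K 0"
  by (simp add: coeffs_in_def is_subfield_C_def)

lemma mvars_0[simp]: "mvars 0 = {}" by (simp add: mvars_def)

abbreviation sv :: "'v \<Rightarrow> 'v \<Rightarrow>\<^sub>0 nat" where "sv v \<equiv> Poly_Mapping.single v 1"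

lemma lookup_sv: "Poly_Mapping.lookup (sv v) w = (if v = w then 1 else 0)"
  by (simp add: lookup_single)
lemma lookup_sv'[simp]: "Poly_Mapping.lookup (Poly_Mapping.single v (Suc 0)) w = (if v = w then Suc 0 else 0)"
  by (simp add: lookup_single)

lemma minus_plus_sv: "0 < Poly_Mapping.lookup k v \<Longrightarrow> (k - sv v) + sv v = k"
  by (rule poly_mapping_eqI) (auto simp: lookup_add lookup_minus lookup_sv)

lemma plus_minus_sv: "(k + sv v) - sv v = k"
  by (rule poly_mapping_eqI) (auto simp: lookup_add lookup_minus lookup_sv)

lemma inj_plus_sv: "inj (\<lambda>m. m + sv v)"
  by (rule injI) (metis plus_minus_sv)

lemma keys_plus_sv: "Poly_Mapping.keys (m + sv v) \<subseteq> Poly_Mapping.keys m \<union> {v}"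
  using keys_add[of m "sv v"] by auto

lemma keys_minus_sv: "Poly_Mapping.keys (m - sv v) \<subseteq> Poly_Mapping.keys m"
  by (auto simp: in_keys_iff lookup_minus)

lemma mon_plus_sv: "mon (m + sv v) a = mon m a * a v"
proof -
  let ?W = "Poly_Mapping.keys m \<union> {v}"
  have "mon (m + sv v) a = (\<Prod>w\<in>?W. a w ^ Poly_Mapping.lookup (m + sv v) w)"
    by (rule mon_superset) (use keys_plus_sv[of m v] in auto)
  also have "\<dots> = (\<Prod>w\<in>?W. a w ^ Poly_Mapping.lookup m w) * (\<Prod>w\<in>?W. a w ^ Poly_Mapping.lookup (sv v) w)"
    by (simp only: lookup_add power_add prod.distrib)
  also have "(\<Prod>w\<in>?W. a w ^ Poly_Mapping.lookup (sv v) w) = a v"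
    by (subst prod.mono_neutral_right[of ?W "{v}"]) auto
  also have "(\<Prod>w\<in>?W. a w ^ Poly_Mapping.lookup m w) = mon m a"
    by (rule mon_superset[symmetric]) auto
  finally show ?thesis .
qed

definition shiftl :: "'v \<Rightarrow> 'v mpoly_c \<Rightarrow> 'v mpoly_c" where
  "shiftl l G = Abs_poly_mapping (\<lambda>k. if 0 < Poly_Mapping.lookup k l then Poly_Mapping.lookup G (k - sv l) else 0)"

lemma lookup_shiftl: "Poly_Mapping.lookup (shiftl l G) =
   (\<lambda>k. if 0 < Poly_Mapping.lookup k l then Poly_Mapping.lookup G (k - sv l) else 0)"
proof -
  have "{k. (if 0 < Poly_Mapping.lookup k l then Poly_Mapping.lookup G (k - sv l) else 0) \<noteq> 0}
      \<subseteq> (\<lambda>m. m + sv l) ` Poly_Mapping.keys G"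
  proof
    fix k assume "k \<in> {k. (if 0 < Poly_Mapping.lookup k l then Poly_Mapping.lookup G (k - sv l) else 0) \<noteq> 0}"
    then have "0 < Poly_Mapping.lookup k l" "k - sv l \<in> Poly_Mapping.keys G" by (auto split: if_splits simp: in_keys_iff)
    then show "k \<in> (\<lambda>m. m + sv l) ` Poly_Mapping.keys G" using minus_plus_sv by (metis image_eqI)
  qed
  then have "finite {k. (if 0 < Poly_Mapping.lookup k l then Poly_Mapping.lookup G (k - sv l) else 0) \<noteq> 0}"
    by (rule finite_subset) simp
  then show ?thesis unfolding shiftl_def by (rule lookup_Abs_poly_mapping)
qed

lemma lookup_shiftl_plus: "Poly_Mapping.lookup (shiftl l G) (m + sv l) = Poly_Mapping.lookup G m"
  by (simp add: lookup_shiftl lookup_add lookup_sv plus_minus_sv)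

lemma lookup_shiftl_zero: "Poly_Mapping.lookup k l = 0 \<Longrightarrow> Poly_Mapping.lookup (shiftl l G) k = 0"
  by (simp add: lookup_shiftl)

lemma keys_shiftl: "Poly_Mapping.keys (shiftl l G) = (\<lambda>m. m + sv l) ` Poly_Mapping.keys G"
proof
  show "Poly_Mapping.keys (shiftl l G) \<subseteq> (\<lambda>m. m + sv l) ` Poly_Mapping.keys G"
  proof
    fix k assume k: "k \<in> Poly_Mapping.keys (shiftl l G)"
    then have "0 < Poly_Mapping.lookup k l" using lookup_shiftl_zero by (fastforce simp: in_keys_iff)
    then have "k = (k - sv l) + sv l" using minus_plus_sv by metis
    moreover have "k - sv l \<in> Poly_Mapping.keys G"
      using k \<open>0 < Poly_Mapping.lookup k l\<close> by (simp add: in_keys_iff lookup_shiftl)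
    ultimately show "k \<in> (\<lambda>m. m + sv l) ` Poly_Mapping.keys G" by blast
  qed
  show "(\<lambda>m. m + sv l) ` Poly_Mapping.keys G \<subseteq> Poly_Mapping.keys (shiftl l G)"
  proof
    fix k assume "k \<in> (\<lambda>m. m + sv l) ` Poly_Mapping.keys G"
    then obtain m where "k = m + sv l" "m \<in> Poly_Mapping.keys G" by blast
    then show "k \<in> Poly_Mapping.keys (shiftl l G)"
      using lookup_shiftl_plus[of l G m] by (simp add: in_keys_iff)
  qed
qed

lemma mpeval_shiftl: "mpeval (shiftl l G) a = mpeval G a * a l"
proof -
  have "mpeval (shiftl l G) a = (\<Sum>k\<in>(\<lambda>m. m + sv l) ` Poly_Mapping.keys G. Poly_Mapping.lookup (shiftl l G) k * mon k a)"
    by (simp add: mpeval_mon keys_shiftl)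
  also have "\<dots> = (\<Sum>m\<in>Poly_Mapping.keys G. Poly_Mapping.lookup G m * (mon m a * a l))"
  proof (subst sum.reindex)
    show "inj_on (\<lambda>m. m + sv l) (Poly_Mapping.keys G)" using inj_plus_sv by (rule inj_on_subset) simp
    show "(\<Sum>m\<in>Poly_Mapping.keys G. ((\<lambda>k. Poly_Mapping.lookup (shiftl l G) k * mon k a) \<circ> (\<lambda>m. m + sv l)) m) =
      (\<Sum>m\<in>Poly_Mapping.keys G. Poly_Mapping.lookup G m * (mon m a * a l))"
      by (rule sum.cong) (simp_all only: o_def lookup_shiftl_plus mon_plus_sv)
  qed
  also have "\<dots> = mpeval G a * a l"
    by (simp add: mpeval_mon sum_distrib_right mult.assoc)
  finally show ?thesis .
qed

lemma mvars_shiftl: "mvars (shiftl l G) \<subseteq> mvars G \<union> {l}"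
  unfolding mvars_def keys_shiftl using keys_plus_sv by fastforce

lemma coeffs_in_shiftl: "is_subfield_C K \<Longrightarrow> coeffs_in K G \<Longrightarrow> coeffs_in K (shiftl l G)"
  by (simp add: coeffs_in_def lookup_shiftl is_subfield_C_def)

lemma shiftl_eq_0: "shiftl l G = 0 \<Longrightarrow> G = 0"
  by (rule poly_mapping_eqI) (metis lookup_shiftl_plus lookup_zero)

lemma rep_step:
  assumes K: "is_subfield_C K"
    and "\<forall>i. \<exists>g. coeffs_in K g \<and> mvars g \<subseteq> {..<l} \<and> mpeval g x = coeff p i"
  shows "\<exists>G. coeffs_in K G \<and> mvars G \<subseteq> {..<Suc l} \<and> mpeval G x = poly p (x l) \<and> (G = 0 \<longrightarrow> p = 0)"
  using assms(2)
proof (induction p rule: pCons_induct)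
  case 0
  then show ?case using coeffs_in_0[OF K] by (intro exI[of _ 0]) auto
next
  case (pCons a q)
  have "\<forall>i. \<exists>g. coeffs_in K g \<and> mvars g \<subseteq> {..<l} \<and> mpeval g x = coeff q i"
  proof
    fix i show "\<exists>g. coeffs_in K g \<and> mvars g \<subseteq> {..<l} \<and> mpeval g x = coeff q i"
      using pCons.prems[rule_format, of "Suc i"] by simp
  qed
  then obtain Gq where Gq: "coeffs_in K Gq" "mvars Gq \<subseteq> {..<Suc l}" "mpeval Gq x = poly q (x l)" "Gq = 0 \<longrightarrow> q = 0"
    using pCons.IH by blast
  obtain g where g: "coeffs_in K g" "mvars g \<subseteq> {..<l}" "mpeval g x = a"
    using pCons.prems[rule_format, of 0] by auto
  define G where "G = g + shiftl l Gq"
  have "coeffs_in K G" unfolding G_def by (rule coeffs_in_add[OF K g(1) coeffs_in_shiftl[OF K Gq(1)]])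
  moreover have "mvars G \<subseteq> {..<Suc l}" unfolding G_def
  proof -
    have "mvars (shiftl l Gq) \<subseteq> {..<Suc l}" using mvars_shiftl[of l Gq] Gq(2) by auto
    moreover have "mvars g \<subseteq> {..<Suc l}" using g(2) by auto
    ultimately show "mvars (g + shiftl l Gq) \<subseteq> {..<Suc l}" using mvars_add[of g "shiftl l Gq"] by blast
  qed
  moreover have "mpeval G x = poly (pCons a q) (x l)"
    unfolding G_def by (simp only: mpeval_add mpeval_shiftl g(3) Gq(3) poly_pCons mult.commute)
  moreover have "G = 0 \<longrightarrow> pCons a q = 0"
  proof
    assume G0: "G = 0"
    have "g = 0"
    proof (rule poly_mapping_eqI)
      fix m
      show "Poly_Mapping.lookup g m = Poly_Mapping.lookup 0 m"
      proof (cases "Poly_Mapping.lookup m l = 0")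
        case True
        have "Poly_Mapping.lookup (g + shiftl l Gq) m = 0" using G0 unfolding G_def by simp
        then show ?thesis using lookup_shiftl_zero[OF True, of Gq] by (simp add: lookup_add)
      next
        case False
        have "m \<notin> Poly_Mapping.keys g"
        proof
          assume "m \<in> Poly_Mapping.keys g"
          then have "l \<in> mvars g" using False unfolding mvars_def by (auto simp: in_keys_iff)
          then show False using g(2) by auto
        qed
        then show ?thesis by (simp add: in_keys_iff)
      qed
    qed
    then have "a = 0" using g by simp
    moreover have "Gq = 0" using G0 \<open>g = 0\<close> shiftl_eq_0[of l Gq] unfolding G_def by simp
    ultimately show "pCons a q = 0" using Gq by simp
  qed
  ultimately show ?case by blast
qed



lemma lookup_mpderiv: "Poly_Mapping.lookup (mpderiv v p) m =
   of_nat (Poly_Mapping.lookup m v + 1) * Poly_Mapping.lookup p (m + sv v)"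
proof -
  have "{m. of_nat (Poly_Mapping.lookup m v + 1) * Poly_Mapping.lookup p (m + sv v) \<noteq> (0::complex)}
     \<subseteq> (\<lambda>m. m + sv v) -` Poly_Mapping.keys p" by (auto simp: in_keys_iff)
  moreover have "finite ((\<lambda>m. m + sv v) -` Poly_Mapping.keys p)"
    by (rule finite_vimageI) (simp_all add: inj_plus_sv)
  ultimately have "finite {m. of_nat (Poly_Mapping.lookup m v + 1) * Poly_Mapping.lookup p (m + sv v) \<noteq> (0::complex)}"
    by (rule finite_subset)
  then show ?thesis unfolding mpderiv_def by simp
qed

lemma mon_minus_sv:
  assumes "finite V" "Poly_Mapping.keys m \<subseteq> V" "v \<in> V"
  shows "mon (m - sv v) a = a v ^ (Poly_Mapping.lookup m v - 1) * (\<Prod>w\<in>V-{v}. a w ^ Poly_Mapping.lookup m w)"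
proof -
  have "mon (m - sv v) a = (\<Prod>w\<in>V. a w ^ Poly_Mapping.lookup (m - sv v) w)"
    by (rule mon_superset) (use assms keys_minus_sv[of m v] in auto)
  also have "\<dots> = a v ^ Poly_Mapping.lookup (m - sv v) v * (\<Prod>w\<in>V-{v}. a w ^ Poly_Mapping.lookup (m - sv v) w)"
    using assms by (simp add: prod.remove)
  also have "\<dots> = a v ^ (Poly_Mapping.lookup m v - 1) * (\<Prod>w\<in>V-{v}. a w ^ Poly_Mapping.lookup m w)"
    by (auto simp: lookup_minus intro!: prod.cong)
  finally show ?thesis .
qed

lemma mpeval_mpderiv:
  assumes V: "finite V" and pv: "mvars p \<subseteq> V" and v: "v \<in> V"
  shows "mpeval (mpderiv v p) a = (\<Sum>m\<in>Poly_Mapping.keys p. Poly_Mapping.lookup p m *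
      (of_nat (Poly_Mapping.lookup m v) * (a v ^ (Poly_Mapping.lookup m v - 1) *
         (\<Prod>w\<in>V-{v}. a w ^ Poly_Mapping.lookup m w))))"
proof -
  define A where "A = {m \<in> Poly_Mapping.keys p. 0 < Poly_Mapping.lookup m v}"
  have fA: "finite A" unfolding A_def by simp
  have inj: "inj_on (\<lambda>m. m - sv v) A"
  proof (rule inj_onI)
    fix m1 m2 assume "m1 \<in> A" "m2 \<in> A" "m1 - sv v = m2 - sv v"
    then show "m1 = m2" unfolding A_def by (metis (mono_tags, lifting) mem_Collect_eq minus_plus_sv)
  qed
  have sub: "Poly_Mapping.keys (mpderiv v p) \<subseteq> (\<lambda>m. m - sv v) ` A"
  proof
    fix m' assume "m' \<in> Poly_Mapping.keys (mpderiv v p)"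
    then have "m' + sv v \<in> Poly_Mapping.keys p" by (auto simp: in_keys_iff lookup_mpderiv)
    moreover have "0 < Poly_Mapping.lookup (m' + sv v) v" by (simp add: lookup_add)
    ultimately have "m' + sv v \<in> A" unfolding A_def by simp
    then show "m' \<in> (\<lambda>m. m - sv v) ` A" using plus_minus_sv by (metis image_eqI)
  qed
  have "mpeval (mpderiv v p) a = (\<Sum>m'\<in>(\<lambda>m. m - sv v) ` A. Poly_Mapping.lookup (mpderiv v p) m' * mon m' a)"
    by (rule mpeval_superset[OF _ sub]) (simp add: fA)
  also have "\<dots> = (\<Sum>m\<in>A. Poly_Mapping.lookup (mpderiv v p) (m - sv v) * mon (m - sv v) a)"
    by (subst sum.reindex[OF inj]) simp
  also have "\<dots> = (\<Sum>m\<in>A. Poly_Mapping.lookup p m *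
      (of_nat (Poly_Mapping.lookup m v) * (a v ^ (Poly_Mapping.lookup m v - 1) *
         (\<Prod>w\<in>V-{v}. a w ^ Poly_Mapping.lookup m w))))"
  proof (rule sum.cong[OF refl])
    fix m assume m: "m \<in> A"
    then have m0: "0 < Poly_Mapping.lookup m v" and mk: "m \<in> Poly_Mapping.keys p" unfolding A_def by auto
    have km: "Poly_Mapping.keys m \<subseteq> V" using mk pv unfolding mvars_def by auto
    have "Poly_Mapping.lookup (mpderiv v p) (m - sv v) = of_nat (Poly_Mapping.lookup m v) * Poly_Mapping.lookup p m"
      using m0 minus_plus_sv[OF m0] by (simp add: lookup_mpderiv lookup_minus)
    then show "Poly_Mapping.lookup (mpderiv v p) (m - sv v) * mon (m - sv v) a = Poly_Mapping.lookup p m *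
      (of_nat (Poly_Mapping.lookup m v) * (a v ^ (Poly_Mapping.lookup m v - 1) *
         (\<Prod>w\<in>V-{v}. a w ^ Poly_Mapping.lookup m w)))"
      using mon_minus_sv[OF V km v, of a] by simp
  qed
  also have "\<dots> = (\<Sum>m\<in>Poly_Mapping.keys p. Poly_Mapping.lookup p m *
      (of_nat (Poly_Mapping.lookup m v) * (a v ^ (Poly_Mapping.lookup m v - 1) *
         (\<Prod>w\<in>V-{v}. a w ^ Poly_Mapping.lookup m w))))"
    by (rule sum.mono_neutral_left) (auto simp: A_def)
  finally show ?thesis .
qed

lemma chain:
  assumes E: "sr E" and D: "der E D" and KE: "K \<subseteq> E" and DK: "\<forall>c\<in>K. D c = 0"
    and V: "finite V" and pv: "mvars p \<subseteq> V" and pK: "coeffs_in K p" and aE: "\<forall>v\<in>V. a v \<in> E"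
  shows "D (mpeval p a) = (\<Sum>v\<in>V. mpeval (mpderiv v p) a * D (a v))"
proof -
  let ?P = "\<lambda>m. \<Prod>w\<in>V. a w ^ Poly_Mapping.lookup m w"
  have cE: "Poly_Mapping.lookup p m \<in> E" for m using pK KE unfolding coeffs_in_def by auto
  have PE: "?P m \<in> E" for m using aE by (intro sr_prod[OF E] sr_power[OF E]) auto
  have km: "m \<in> Poly_Mapping.keys p \<Longrightarrow> Poly_Mapping.keys m \<subseteq> V" for m using pv unfolding mvars_def by auto
  have "mpeval p a = (\<Sum>m\<in>Poly_Mapping.keys p. Poly_Mapping.lookup p m * ?P m)"
    unfolding mpeval_mon by (rule sum.cong[OF refl]) (simp add: mon_superset[OF V km])
  then have "D (mpeval p a) = D (\<Sum>m\<in>Poly_Mapping.keys p. Poly_Mapping.lookup p m * ?P m)" by simp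
  also have "\<dots> = (\<Sum>m\<in>Poly_Mapping.keys p. D (Poly_Mapping.lookup p m * ?P m))"
    by (rule der_sum[OF E D]) (rule sr_mult[OF E cE PE])
  also have "\<dots> = (\<Sum>m\<in>Poly_Mapping.keys p. Poly_Mapping.lookup p m * D (?P m))"
  proof (rule sum.cong[OF refl])
    fix m
    have "D (Poly_Mapping.lookup p m) = 0" using DK pK unfolding coeffs_in_def by auto
    then show "D (Poly_Mapping.lookup p m * ?P m) = Poly_Mapping.lookup p m * D (?P m)"
      using der_mult[OF D cE PE] by simp
  qed
  also have "\<dots> = (\<Sum>m\<in>Poly_Mapping.keys p. Poly_Mapping.lookup p m * (\<Sum>v\<in>V.
      (of_nat (Poly_Mapping.lookup m v) * (a v ^ (Poly_Mapping.lookup m v - 1) *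
         (\<Prod>w\<in>V-{v}. a w ^ Poly_Mapping.lookup m w))) * D (a v)))"
  proof (rule sum.cong[OF refl])
    fix m
    have "D (?P m) = (\<Sum>v\<in>V. D (a v ^ Poly_Mapping.lookup m v) * (\<Prod>w\<in>V-{v}. a w ^ Poly_Mapping.lookup m w))"
      using aE by (intro der_prod[OF E D V]) (auto intro: sr_power[OF E])
    also have "\<dots> = (\<Sum>v\<in>V. (of_nat (Poly_Mapping.lookup m v) * (a v ^ (Poly_Mapping.lookup m v - 1) *
         (\<Prod>w\<in>V-{v}. a w ^ Poly_Mapping.lookup m w))) * D (a v))"
      using aE by (intro sum.cong[OF refl]) (simp add: der_power[OF E D])
    finally show "Poly_Mapping.lookup p m * D (?P m) = Poly_Mapping.lookup p m * (\<Sum>v\<in>V.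
      (of_nat (Poly_Mapping.lookup m v) * (a v ^ (Poly_Mapping.lookup m v - 1) *
         (\<Prod>w\<in>V-{v}. a w ^ Poly_Mapping.lookup m w))) * D (a v))" by simp
  qed
  also have "\<dots> = (\<Sum>v\<in>V. (\<Sum>m\<in>Poly_Mapping.keys p. Poly_Mapping.lookup p m *
      (of_nat (Poly_Mapping.lookup m v) * (a v ^ (Poly_Mapping.lookup m v - 1) *
         (\<Prod>w\<in>V-{v}. a w ^ Poly_Mapping.lookup m w)))) * D (a v))"
    by (simp add: sum_distrib_left sum_distrib_right mult.assoc) (rule sum.swap)
  also have "\<dots> = (\<Sum>v\<in>V. mpeval (mpderiv v p) a * D (a v))"
    by (rule sum.cong[OF refl]) (simp add: mpeval_mpderiv[OF V pv])
  finally show ?thesis .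
qed



lemma sr_K: "is_subfield_C K \<Longrightarrow> sr K"
  by (simp add: is_subfield_C_def sr_def)

lemma mpeval_single0: "mpeval (Poly_Mapping.single 0 c) a = c"
proof -
  have "mpeval (Poly_Mapping.single 0 c) a = (\<Sum>m\<in>{0}. Poly_Mapping.lookup (Poly_Mapping.single 0 c) m * mon m a)"
    by (rule mpeval_superset) auto
  then show ?thesis by (simp add: mon_def)
qed

lemma rep_const:
  assumes K: "is_subfield_C K" and c: "c \<in> K"
  shows "\<exists>g. coeffs_in K g \<and> mvars g \<subseteq> {..<l} \<and> mpeval g x = c"
proof (intro exI conjI)
  show "coeffs_in K (Poly_Mapping.single 0 c)"
    using K c by (simp add: coeffs_in_def lookup_single when_def is_subfield_C_def)
  show "mvars (Poly_Mapping.single 0 c) \<subseteq> {..<l}" by (simp add: mvars_def)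
  show "mpeval (Poly_Mapping.single 0 c) x = c" by (rule mpeval_single0)
qed

definition Dgood :: "complex set \<Rightarrow> complex set \<Rightarrow> (complex \<Rightarrow> complex) \<Rightarrow> bool" where
  "Dgood K E D \<longleftrightarrow> sr E \<and> der E D \<and> K \<subseteq> E \<and> (\<forall>c\<in>K. D c = 0)"

lemma x_chain:
  assumes K: "is_subfield_C K" and ind: "alg_indep K n x" and i: "i < n"
  shows "l \<le> n \<Longrightarrow> \<exists>E D. Dgood K E D \<and> (\<forall>l'<l. x l' \<in> E \<and> D (x l') = (if l' = i then 1 else 0)) \<and>
     (\<forall>e\<in>E. \<exists>g. coeffs_in K g \<and> mvars g \<subseteq> {..<l} \<and> mpeval g x = e)"
proof (induction l)
  case 0
  have "Dgood K K (\<lambda>_. 0)" using sr_K[OF K] by (simp add: Dgood_def der_def)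
  then show ?case using rep_const[OF K] by blast
next
  case (Suc l)
  then obtain E D where ED: "Dgood K E D" and xs: "\<forall>l'<l. x l' \<in> E \<and> D (x l') = (if l' = i then 1 else 0)"
    and rep: "\<forall>e\<in>E. \<exists>g. coeffs_in K g \<and> mvars g \<subseteq> {..<l} \<and> mpeval g x = e" by auto
  have E: "sr E" and D: "der E D" using ED by (auto simp: Dgood_def)
  have tr: "\<not> (\<exists>p. cin E p \<and> p \<noteq> 0 \<and> poly p (x l) = 0)"
  proof
    assume "\<exists>p. cin E p \<and> p \<noteq> 0 \<and> poly p (x l) = 0"
    then obtain p where p: "cin E p" "p \<noteq> 0" "poly p (x l) = 0" by blast
    have "\<forall>j. \<exists>g. coeffs_in K g \<and> mvars g \<subseteq> {..<l} \<and> mpeval g x = coeff p j"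
      using p(1) rep unfolding cin_def by blast
    then obtain G where G: "coeffs_in K G" "mvars G \<subseteq> {..<Suc l}" "mpeval G x = poly p (x l)" "G = 0 \<longrightarrow> p = 0"
      using rep_step[OF K] by blast
    have "mvars G \<subseteq> {..<n}" using G(2) Suc.prems by auto
    then have "G = 0" using ind G p(3) unfolding alg_indep_def by auto
    then show False using G(4) p(2) by simp
  qed
  obtain D' where D': "der (adj E (x l)) D'" "\<forall>e\<in>E. D' e = D e" "D' (x l) = (if l = i then 1 else 0)"
    using ext_good[OF E D trans_good[OF tr]] by blast
  have "Dgood K (adj E (x l)) D'"
    using ED D' adj_sr[OF E] adj_sub[OF E] unfolding Dgood_def by auto
  moreover have "\<forall>l'<Suc l. x l' \<in> adj E (x l) \<and> D' (x l') = (if l' = i then 1 else 0)"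
    using xs D' adj_sub[OF E] adj_t[OF E] by (auto simp: less_Suc_eq)
  moreover have "\<forall>e\<in>adj E (x l). \<exists>g. coeffs_in K g \<and> mvars g \<subseteq> {..<Suc l} \<and> mpeval g x = e"
  proof
    fix e assume "e \<in> adj E (x l)"
    then obtain p where p: "cin E p" "e = poly p (x l)" unfolding adj_def by blast
    have "\<forall>j. \<exists>g. coeffs_in K g \<and> mvars g \<subseteq> {..<l} \<and> mpeval g x = coeff p j"
      using p(1) rep unfolding cin_def by blast
    then show "\<exists>g. coeffs_in K g \<and> mvars g \<subseteq> {..<Suc l} \<and> mpeval g x = e"
      using rep_step[OF K] p(2) by blast
  qed
  ultimately show ?case by blast
qed

lemma y_chain:
  fixes y :: "nat \<Rightarrow> complex" and k :: nat
  assumes "Dgood K E0 D0"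
  shows "\<exists>E D. Dgood K E D \<and> E0 \<subseteq> E \<and> (\<forall>e\<in>E0. D e = D0 e) \<and> (\<forall>k'<k. y k' \<in> E)"
proof (induction k)
  case 0
  then show ?case using assms by blast
next
  case (Suc k)
  then obtain E D where ED: "Dgood K E D" "E0 \<subseteq> E" "\<forall>e\<in>E0. D e = D0 e" "\<forall>k'<k. y k' \<in> E" by blast
  have E: "sr E" and D: "der E D" using ED by (auto simp: Dgood_def)
  obtain D' where D': "der (adj E (y k)) D'" "\<forall>e\<in>E. D' e = D e"
    using ext_any[OF E D] by blast
  have "Dgood K (adj E (y k)) D'" using ED D' adj_sr[OF E] adj_sub[OF E] unfolding Dgood_def by auto
  moreover have "E0 \<subseteq> adj E (y k)" using ED adj_sub[OF E] by auto
  moreover have "\<forall>e\<in>E0. D' e = D0 e" using ED D' by auto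
  moreover have "\<forall>k'<Suc k. y k' \<in> adj E (y k)" using ED adj_sub[OF E] adj_t[OF E] by (auto simp: less_Suc_eq)
  ultimately show ?case by blast
qed

lemma deriv_exists:
  assumes K: "is_subfield_C K" and ind: "alg_indep K n x" and i: "i < n"
  shows "\<exists>E D. Dgood K E D \<and> (\<forall>l<n. x l \<in> E \<and> D (x l) = (if l = i then 1 else 0)) \<and> (\<forall>k<n. y k \<in> E)"
proof -
  obtain E0 D0 where 0: "Dgood K E0 D0" "\<forall>l<n. x l \<in> E0 \<and> D0 (x l) = (if l = i then 1 else 0)"
    using x_chain[OF K ind i, of n] by blast
  obtain E D where "Dgood K E D" "E0 \<subseteq> E" "\<forall>e\<in>E0. D e = D0 e" "\<forall>k'<n. y k' \<in> E"
    using y_chain[OF 0(1), where y=y and k=n] by blast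
  then show ?thesis using 0 by (intro exI[of _ E] exI[of _ D]) auto
qed



lemma inj_minus_sv_on: "inj_on (\<lambda>m. m - sv v) {m. 0 < Poly_Mapping.lookup m v}"
proof (rule inj_onI)
  fix m1 m2 assume "m1 \<in> {m. 0 < Poly_Mapping.lookup m v}" "m2 \<in> {m. 0 < Poly_Mapping.lookup m v}" "m1 - sv v = m2 - sv v"
  then have a: "0 < Poly_Mapping.lookup m1 v" and b: "0 < Poly_Mapping.lookup m2 v" and eq: "m1 - sv v = m2 - sv v" by auto
  have "m1 = (m1 - sv v) + sv v" using minus_plus_sv[OF a] by simp
  also have "\<dots> = (m2 - sv v) + sv v" using eq by simp
  also have "\<dots> = m2" using minus_plus_sv[OF b] by simp
  finally show "m1 = m2" .
qed

lemma keys_mpderiv_sub: "Poly_Mapping.keys (mpderiv v p) \<subseteq> (\<lambda>m. m - sv v) ` {m \<in> Poly_Mapping.keys p. 0 < Poly_Mapping.lookup m v}"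
proof
  fix m' assume "m' \<in> Poly_Mapping.keys (mpderiv v p)"
  then have "m' + sv v \<in> Poly_Mapping.keys p" by (auto simp: in_keys_iff lookup_mpderiv)
  moreover have "0 < Poly_Mapping.lookup (m' + sv v) v" by (simp add: lookup_add)
  ultimately have "m' + sv v \<in> {m \<in> Poly_Mapping.keys p. 0 < Poly_Mapping.lookup m v}" by simp
  moreover have "m' = (m' + sv v) - sv v" using plus_minus_sv[of m' v] by simp
  ultimately show "m' \<in> (\<lambda>m. m - sv v) ` {m \<in> Poly_Mapping.keys p. 0 < Poly_Mapping.lookup m v}"
    by blast
qed

definition tdeg :: "('v \<Rightarrow>\<^sub>0 nat) \<Rightarrow> nat" where
  "tdeg m = (\<Sum>v\<in>Poly_Mapping.keys m. Poly_Mapping.lookup m v)"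

lemma tdeg_superset: "finite W \<Longrightarrow> Poly_Mapping.keys m \<subseteq> W \<Longrightarrow> tdeg m = (\<Sum>v\<in>W. Poly_Mapping.lookup m v)"
  unfolding tdeg_def by (rule sum.mono_neutral_left) (auto simp: in_keys_iff)

lemma tdeg_add: "tdeg (a + b) = tdeg a + tdeg b"
proof -
  let ?W = "Poly_Mapping.keys a \<union> Poly_Mapping.keys b"
  have "tdeg (a + b) = (\<Sum>v\<in>?W. Poly_Mapping.lookup (a + b) v)"
    by (rule tdeg_superset) (auto simp: keys_add)
  also have "\<dots> = (\<Sum>v\<in>?W. Poly_Mapping.lookup a v) + (\<Sum>v\<in>?W. Poly_Mapping.lookup b v)"
    by (simp add: lookup_add sum.distrib)
  also have "\<dots> = tdeg a + tdeg b" by (subst (1 2) tdeg_superset[where W = ?W]) auto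
  finally show ?thesis .
qed

lemma tdeg_sv: "tdeg (sv v) = 1"
  by (simp add: tdeg_def)

lemma tdeg_minus_sv: "0 < Poly_Mapping.lookup m v \<Longrightarrow> tdeg m = tdeg (m - sv v) + 1"
proof -
  assume a: "0 < Poly_Mapping.lookup m v"
  have "tdeg m = tdeg ((m - sv v) + sv v)" using minus_plus_sv[OF a] by simp
  also have "\<dots> = tdeg (m - sv v) + 1" using tdeg_add[of "m - sv v" "sv v"] tdeg_sv[of v] by simp
  finally show ?thesis .
qed

definition mu :: "'v mpoly_c \<Rightarrow> nat" where
  "mu p = (\<Sum>m\<in>Poly_Mapping.keys p. tdeg m)"

lemma mu_deriv:
  assumes "mpderiv v p \<noteq> 0"
  shows "mu (mpderiv v p) < mu p"
proof -
  define A where "A = {m \<in> Poly_Mapping.keys p. 0 < Poly_Mapping.lookup m v}"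
  have fA: "finite A" unfolding A_def by simp
  have sub: "Poly_Mapping.keys (mpderiv v p) \<subseteq> (\<lambda>m. m - sv v) ` A"
    using keys_mpderiv_sub unfolding A_def .
  have inj: "inj_on (\<lambda>m. m - sv v) A" using inj_minus_sv_on by (rule inj_on_subset) (auto simp: A_def)
  have ne: "Poly_Mapping.keys (mpderiv v p) \<noteq> {}"
  proof
    assume "Poly_Mapping.keys (mpderiv v p) = {}"
    then have "mpderiv v p = 0" by (intro poly_mapping_eqI) (auto simp: in_keys_iff)
    then show False using assms by simp
  qed
  then have Ane: "A \<noteq> {}" using sub by auto
  have "mu (mpderiv v p) \<le> (\<Sum>m\<in>(\<lambda>m. m - sv v) ` A. tdeg m)"
    unfolding mu_def by (rule sum_mono2) (use fA sub in auto)
  also have "\<dots> = (\<Sum>m\<in>A. tdeg (m - sv v))" by (subst sum.reindex[OF inj]) simp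
  also have "\<dots> < (\<Sum>m\<in>A. tdeg m)"
  proof (rule sum_strict_mono[OF fA Ane])
    fix m assume "m \<in> A"
    then have "0 < Poly_Mapping.lookup m v" by (simp add: A_def)
    from tdeg_minus_sv[OF this] show "tdeg (m - sv v) < tdeg m" by linarith
  qed
  also have "\<dots> \<le> mu p" unfolding mu_def by (rule sum_mono2) (auto simp: A_def)
  finally show ?thesis .
qed

lemma coeffs_in_mpderiv: "is_subfield_C K \<Longrightarrow> coeffs_in K p \<Longrightarrow> coeffs_in K (mpderiv v p)"
  unfolding coeffs_in_def lookup_mpderiv
proof (intro allI)
  fix m assume K: "is_subfield_C K" and c: "\<forall>m. Poly_Mapping.lookup p m \<in> K"
  have "of_nat (Poly_Mapping.lookup m v + 1) \<in> K" by (rule sr_of_nat[OF sr_K[OF K]])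
  then show "of_nat (Poly_Mapping.lookup m v + 1) * Poly_Mapping.lookup p (m + sv v) \<in> K"
    using c sr_mult[OF sr_K[OF K]] by blast
qed

lemma mvars_mpderiv: "mvars (mpderiv v p) \<subseteq> mvars p"
proof
  fix w assume "w \<in> mvars (mpderiv v p)"
  then obtain m' where m': "m' \<in> Poly_Mapping.keys (mpderiv v p)" "w \<in> Poly_Mapping.keys m'"
    unfolding mvars_def by auto
  then have "m' + sv v \<in> Poly_Mapping.keys p" by (auto simp: in_keys_iff lookup_mpderiv)
  moreover have "w \<in> Poly_Mapping.keys (m' + sv v)" using m'(2) by (auto simp: in_keys_iff lookup_add)
  ultimately show "w \<in> mvars p" unfolding mvars_def by auto
qed

lemma const_if_derivs_0:
  assumes "mvars p \<subseteq> {..<n}" and "\<forall>k<n. mpderiv k p = 0"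
  shows "Poly_Mapping.keys p \<subseteq> {0}"
proof
  fix m assume m: "m \<in> Poly_Mapping.keys p"
  have "m = 0"
  proof (rule poly_mapping_eqI)
    fix v
    show "Poly_Mapping.lookup m v = Poly_Mapping.lookup 0 v"
    proof (rule ccontr)
      assume "Poly_Mapping.lookup m v \<noteq> Poly_Mapping.lookup 0 v"
      then have pos: "0 < Poly_Mapping.lookup m v" by simp
      then have "v \<in> mvars p" using m unfolding mvars_def by (auto simp: in_keys_iff)
      then have "v < n" using assms(1) by auto
      then have "Poly_Mapping.lookup (mpderiv v p) (m - sv v) = 0" using assms(2) by simp
      moreover have "Poly_Mapping.lookup (mpderiv v p) (m - sv v) = of_nat (Poly_Mapping.lookup m v) * Poly_Mapping.lookup p m"
        using pos minus_plus_sv[OF pos] by (simp add: lookup_mpderiv lookup_minus)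
      ultimately show False using pos m by (simp add: in_keys_iff)
    qed
  qed
  then show "m \<in> {0}" by simp
qed



theorem theorem1:
  fixes K :: "complex set" and n :: nat and x y :: "nat \<Rightarrow> complex"
    and f :: "nat \<Rightarrow> (nat + nat) mpoly_c"
  assumes "is_subfield_C K" and "\<rat> \<subseteq> K" and "n \<ge> 1"
    and "\<forall>j<n. coeffs_in K (f j) \<and> mvars (f j) \<subseteq> Inl ` {..<n} \<union> Inr ` {..<n}"
    and "\<forall>j<n. mpeval (f j) (case_sum x y) = 0"
    and "alg_indep K n x"
    and "det (mat n n (\<lambda>(j, i). mpeval (mpderiv (Inl i) (f j)) (case_sum x y))) \<noteq> 0"
  shows "alg_indep K n y"
proof -
  have K: "is_subfield_C K" using assms(1) .
  let ?a = "case_sum x y"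
  let ?V = "Inl ` {..<n} \<union> Inr ` {..<n} :: (nat + nat) set"
  have "\<forall>i. \<exists>ED. i < n \<longrightarrow> Dgood K (fst ED) (snd ED) \<and>
      (\<forall>l<n. x l \<in> fst ED \<and> snd ED (x l) = (if l = i then 1 else 0)) \<and> (\<forall>k<n. y k \<in> fst ED)"
  proof
    fix i show "\<exists>ED. i < n \<longrightarrow> Dgood K (fst ED) (snd ED) \<and>
      (\<forall>l<n. x l \<in> fst ED \<and> snd ED (x l) = (if l = i then 1 else 0)) \<and> (\<forall>k<n. y k \<in> fst ED)"
    proof (cases "i < n")
      case True
      then obtain E D where "Dgood K E D" "\<forall>l<n. x l \<in> E \<and> D (x l) = (if l = i then 1 else 0)" "\<forall>k<n. y k \<in> E"
        using deriv_exists[OF K assms(6), of i y] by blast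
      then show ?thesis by (intro exI[of _ "(E, D)"]) simp
    qed simp
  qed
  from choice[OF this] obtain F where F0: "\<forall>i. i < n \<longrightarrow> Dgood K (fst (F i)) (snd (F i)) \<and>
      (\<forall>l<n. x l \<in> fst (F i) \<and> snd (F i) (x l) = (if l = i then 1 else 0)) \<and> (\<forall>k<n. y k \<in> fst (F i))"
    by blast
  have F: "Dgood K (fst (F i)) (snd (F i)) \<and>
      (\<forall>l<n. x l \<in> fst (F i) \<and> snd (F i) (x l) = (if l = i then 1 else 0)) \<and> (\<forall>k<n. y k \<in> fst (F i))"
    if "i < n" for i using F0 that by blast
  define Y where "Y k i = snd (F i) (y k)" for k i
  define J where "J = mat n n (\<lambda>(j, i). mpeval (mpderiv (Inl i) (f j)) ?a)"
  define M where "M = mat n n (\<lambda>(j, k). - mpeval (mpderiv (Inr k) (f j)) ?a)"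
  define Ym where "Ym = mat n n (\<lambda>(k, i). Y k i)"
  have rel: "mpeval (mpderiv (Inl i) (f j)) ?a = (\<Sum>k<n. - mpeval (mpderiv (Inr k) (f j)) ?a * Y k i)"
    if i: "i < n" and j: "j < n" for i j
  proof -
    define E where "E = fst (F i)"
    define D where "D = snd (F i)"
    have ED: "sr E" "der E D" "K \<subseteq> E" "\<forall>c\<in>K. D c = 0" using F[OF i] unfolding E_def D_def Dgood_def by auto
    have xs: "\<forall>l<n. x l \<in> E \<and> D (x l) = (if l = i then 1 else 0)" and ys: "\<forall>k<n. y k \<in> E"
      using F[OF i] unfolding E_def D_def by auto
    have aE: "\<forall>v\<in>?V. ?a v \<in> E" using xs ys by auto
    have "D (mpeval (f j) ?a) = (\<Sum>v\<in>?V. mpeval (mpderiv v (f j)) ?a * D (?a v))"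
      using assms(4) j by (intro chain[OF ED(1,2,3,4) _ _ _ aE]) auto
    moreover have "D (mpeval (f j) ?a) = 0" using assms(5) j der_0[OF ED(1,2)] by simp
    moreover have "(\<Sum>v\<in>?V. mpeval (mpderiv v (f j)) ?a * D (?a v)) =
        (\<Sum>l<n. mpeval (mpderiv (Inl l) (f j)) ?a * D (x l)) + (\<Sum>k<n. mpeval (mpderiv (Inr k) (f j)) ?a * D (y k))"
      by (subst sum.union_disjoint) (auto simp: sum.reindex)
    moreover have "(\<Sum>l<n. mpeval (mpderiv (Inl l) (f j)) ?a * D (x l)) = mpeval (mpderiv (Inl i) (f j)) ?a"
    proof -
      have "(\<Sum>l<n. mpeval (mpderiv (Inl l) (f j)) ?a * D (x l)) =
          (\<Sum>l<n. if l = i then mpeval (mpderiv (Inl l) (f j)) ?a else 0)"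
        using xs by (intro sum.cong) auto
      also have "\<dots> = mpeval (mpderiv (Inl i) (f j)) ?a" using i by simp
      finally show ?thesis .
    qed
    ultimately have "mpeval (mpderiv (Inl i) (f j)) ?a + (\<Sum>k<n. mpeval (mpderiv (Inr k) (f j)) ?a * D (y k)) = 0"
      by simp
    then have "mpeval (mpderiv (Inl i) (f j)) ?a = - (\<Sum>k<n. mpeval (mpderiv (Inr k) (f j)) ?a * D (y k))"
      by (simp add: eq_neg_iff_add_eq_0)
    then show ?thesis unfolding Y_def D_def by (simp add: sum_negf)
  qed
  have JMY: "J = M * Ym"
  proof (rule eq_matI)
    fix j i assume "j < dim_row (M * Ym)" "i < dim_col (M * Ym)"
    then have j: "j < n" and i: "i < n" by (auto simp: M_def Ym_def)
    have "(M * Ym) $$ (j, i) = (\<Sum>k\<in>{0..<n}. M $$ (j, k) * Ym $$ (k, i))"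
      using i j by (simp add: M_def Ym_def scalar_prod_def)
    also have "\<dots> = (\<Sum>k<n. - mpeval (mpderiv (Inr k) (f j)) ?a * Y k i)"
      using i j by (simp add: M_def Ym_def atLeast0LessThan)
    also have "\<dots> = J $$ (j, i)" using rel[OF i j] i j by (simp add: J_def)
    finally show "J $$ (j, i) = (M * Ym) $$ (j, i)" by simp
  qed (auto simp: J_def M_def Ym_def)
  have "det J = det M * det Ym" unfolding JMY by (rule det_mult[of _ n]) (auto simp: M_def Ym_def)
  moreover have "det J \<noteq> 0" using assms(7) unfolding J_def .
  ultimately have detY: "det Ym \<noteq> 0" by auto
  show "alg_indep K n y" unfolding alg_indep_def
  proof (rule ccontr)
    assume "\<not> (\<forall>p. coeffs_in K p \<and> mvars p \<subseteq> {..<n} \<and> mpeval p y = 0 \<longrightarrow> p = 0)"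
    then obtain P0 where P0: "coeffs_in K P0" "mvars P0 \<subseteq> {..<n}" "mpeval P0 y = 0" "P0 \<noteq> 0" by blast
    define Z where "Z P \<longleftrightarrow> coeffs_in K P \<and> mvars P \<subseteq> {..<n} \<and> mpeval P y = 0 \<and> P \<noteq> 0" for P :: "nat mpoly_c"
    have "Z P0" using P0 unfolding Z_def by blast
    from ex_has_least_nat[of Z P0 mu, OF this] obtain P where ZP: "Z P" and Pmin0: "\<forall>Q. Z Q \<longrightarrow> mu P \<le> mu Q"
      by blast
    have Pmin: "mu P \<le> mu Q" if "Z Q" for Q using Pmin0 that by blast
    have PK: "coeffs_in K P" and Pv: "mvars P \<subseteq> {..<n}" and Py: "mpeval P y = 0" and P0': "P \<noteq> 0"
      using ZP unfolding Z_def by auto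
    define w where "w = vec n (\<lambda>k. mpeval (mpderiv k P) y)"
    have "transpose_mat Ym *\<^sub>v w = 0\<^sub>v n"
    proof (rule eq_vecI)
      fix i assume "i < dim_vec (0\<^sub>v n :: complex vec)"
      then have i: "i < n" by simp
      define E where "E = fst (F i)"
      define D where "D = snd (F i)"
      have ED: "sr E" "der E D" "K \<subseteq> E" "\<forall>c\<in>K. D c = 0" using F[OF i] unfolding E_def D_def Dgood_def by auto
      have ys: "\<forall>k\<in>{..<n}. y k \<in> E" using F[OF i] unfolding E_def by auto
      have "D (mpeval P y) = (\<Sum>k\<in>{..<n}. mpeval (mpderiv k P) y * D (y k))"
        by (rule chain[OF ED _ Pv PK ys]) simp
      then have "(\<Sum>k<n. mpeval (mpderiv k P) y * Y k i) = 0"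
        using Py der_0[OF ED(1,2)] unfolding Y_def D_def by simp
      moreover have "(transpose_mat Ym *\<^sub>v w) $ i = (\<Sum>k<n. Y k i * mpeval (mpderiv k P) y)"
        using i by (simp add: Ym_def w_def scalar_prod_def atLeast0LessThan)
      ultimately show "(transpose_mat Ym *\<^sub>v w) $ i = 0\<^sub>v n $ i" using i by (simp add: mult.commute)
    qed (simp add: Ym_def)
    moreover have "det (transpose_mat Ym) \<noteq> 0" using detY by (simp add: det_transpose[of _ n] Ym_def)
    moreover have tc: "transpose_mat Ym \<in> carrier_mat n n" by (simp add: Ym_def)
    moreover have "w \<in> carrier_vec n" by (simp add: w_def)
    ultimately have "w = 0\<^sub>v n"
      using det_0_iff_vec_prod_zero_field[OF tc] by blast
    then have d0: "mpeval (mpderiv k P) y = 0" if "k < n" for k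
    proof -
      have "w $ k = 0" using \<open>w = 0\<^sub>v n\<close> that by simp
      then show ?thesis using that unfolding w_def by simp
    qed
    have "\<forall>k<n. mpderiv k P = 0"
    proof (intro allI impI)
      fix k assume k: "k < n"
      show "mpderiv k P = 0"
      proof (rule ccontr)
        assume nz: "mpderiv k P \<noteq> 0"
        have "Z (mpderiv k P)" unfolding Z_def
          using coeffs_in_mpderiv[OF K PK] mvars_mpderiv[of k P] Pv d0[OF k] nz by auto
        then have "mu P \<le> mu (mpderiv k P)" by (rule Pmin)
        then show False using mu_deriv[OF nz] by simp
      qed
    qed
    then have kP: "Poly_Mapping.keys P \<subseteq> {0}" using const_if_derivs_0[OF Pv] by blast
    have "mpeval P y = (\<Sum>m\<in>{0}. Poly_Mapping.lookup P m * mon m y)"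
      by (rule mpeval_superset[OF _ kP]) simp
    then have "Poly_Mapping.lookup P 0 = 0" using Py by (simp add: mon_def)
    moreover have "Poly_Mapping.lookup P m = 0" if "m \<noteq> 0" for m
      using kP that by (auto simp: in_keys_iff)
    ultimately have "P = 0" by (intro poly_mapping_eqI) (case_tac "k = 0", auto)
    then show False using P0' by simp
  qed
qed

end
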